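(* Let $A, B, C \in \mathbb{Z}$ with $A > 0$ such that $Ax^2 + Bx + C$ is irreducible, let $\beta$ be a real root of it and $\beta'$ its other root. Then the following are equivalent: (i) $p_\beta(\alpha) < \infty$ for every $\alpha \in \mathbb{R}$; (ii) either $2A + B \leq 0$, or ($2A + B > 0$ and $A + B + C < 0$); (iii) at least one of $\beta$ and $\beta'$ is greater than $1$.
   Context: For $\beta, \alpha \in \mathbb{C}$, $p_\beta(\alpha) \in \mathbb{Z}_{\geq 0}\cup\{\infty\}$ is the number of polynomials $f \in \mathbb{Z}_{\geq 0}[x]$ (non-negative integer coefficients) with $f(\beta) = \alpha$. *)

theory Defs
  imports "HOL-Computational_Algebra.Computational_Algebra"
begin

text \<open>The set of polynomials with non-negative integer coefficients (modelled as nat poly)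
  whose value at beta equals alpha. p_beta(alpha) is its cardinality (possibly infinite).\<close>
definition reps :: "real \<Rightarrow> real \<Rightarrow> nat poly set" where
  "reps \<beta> \<alpha> = {f :: nat poly. poly (map_poly real f) \<beta> = \<alpha>}"

end

theory Submission
  imports Defs
begin

definition ev :: "nat poly \<Rightarrow> real \<Rightarrow> real" where
  "ev f x = poly (map_poly real f) x"

lemma ev_add[simp]: "ev (p + q) x = ev p x + ev q x"
  unfolding ev_def by (subst poly_add[symmetric], rule arg_cong[where f="\<lambda>p. poly p x"], rule poly_eqI) (simp add: coeff_map_poly)

lemma mp_mult: "map_poly real (p * q) = map_poly real p * map_poly real q"
  by (rule poly_eqI) (simp add: coeff_map_poly coeff_mult)

lemma ev_mult[simp]: "ev (p * q) x = ev p x * ev q x"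
  unfolding ev_def by (simp add: mp_mult)

lemma ev_pCons[simp]: "ev (pCons a p) x = real a + x * ev p x"
  unfolding ev_def by (simp add: map_poly_pCons)

lemma ev_0[simp]: "ev 0 x = 0" unfolding ev_def by simp

lemma ev_monom[simp]: "ev (monom a k) x = real a * x ^ k"
  unfolding ev_def by (simp add: map_poly_monom poly_monom)

lemma ev_one[simp]: "ev 1 x = 1" unfolding ev_def by simp

lemma ev_power[simp]: "ev (p ^ n) x = ev p x ^ n"
  by (induction n) simp_all


lemma ev_altdef: "ev f x = (\<Sum>i\<le>degree f. real (coeff f i) * x ^ i)"
  unfolding ev_def by (simp add: poly_altdef coeff_map_poly degree_map_poly)

lemma q_eval: "poly (map_poly real_of_int [:C, B, A:]) b = of_int A * b^2 + of_int B * b + of_int C"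
  by (simp add: map_poly_pCons power2_eq_square algebra_simps)

lemma aux: "(1::nat) \<le> r \<Longrightarrow> s \<le> t \<Longrightarrow> s < r + t" by simp
lemma aux2: "(1::nat) \<le> m \<Longrightarrow> s \<le> m * s" by (metis mult_le_mono1 mult_1)
lemma aux3: "(1::nat) \<le> m \<Longrightarrow> a < b \<Longrightarrow> m * a < m * b" by simp

lemma chain:
  fixes S M R :: "nat poly" and b :: real
  assumes eq: "ev S b * (1 - ev M b) = ev R b" and M1: "poly M 1 \<ge> 1" and R1: "poly R 1 \<ge> 1"
  shows "infinite (reps b (ev S b))"
proof -
  define f where "f = rec_nat S (\<lambda>_ p. R + M * p)"
  have f0: "f 0 = S" and fS: "\<And>n. f (Suc n) = R + M * f n" by (simp_all add: f_def)
  have evf: "ev (f n) b = ev S b" for n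
  proof (induction n)
    case 0 then show ?case by (simp add: f0)
  next
    case (Suc n)
    have "ev (f (Suc n)) b = ev R b + ev M b * ev S b" by (simp only: fS ev_add ev_mult Suc.IH)
    also have "\<dots> = ev S b" by (simp add: eq[symmetric] algebra_simps)
    finally show ?case .
  qed
  have mono: "poly (f n) 1 < poly (f (Suc n)) 1" for n
  proof (induction n)
    case 0
    have "poly S 1 \<le> poly M 1 * poly S 1" using M1 by (rule aux2)
    then have "poly S 1 < poly R 1 + poly M 1 * poly S 1" using R1 by (rule_tac aux) 
    then show ?case unfolding f0 fS poly_add poly_mult .
  next
    case (Suc n)
    have "poly M 1 * poly (f n) 1 < poly M 1 * poly (f (Suc n)) 1" using M1 Suc.IH by (rule aux3)
    then show ?case unfolding fS[of "Suc n"] fS[of n] poly_add poly_mult by simp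
  qed
  have sm: "strict_mono (\<lambda>n. poly (f n) (1::nat))" using mono by (simp add: strict_mono_Suc_iff)
  have inj: "inj f"
  proof (rule injI)
    fix m n assume "f m = f n"
    then have "poly (f m) (1::nat) = poly (f n) 1" by simp
    then show "m = n" using sm strict_mono_eq by metis
  qed
  have "range f \<subseteq> reps b (ev S b)" using evf by (auto simp: reps_def ev_def)
  moreover have "infinite (range f)" using inj finite_imageD by blast
  ultimately show ?thesis using finite_subset by blast
qed

lemma exp_beats_lin: "\<exists>n\<ge>1. (2*n+1) * c^n < (c+1::nat)^n"
proof -
  define x where "x = real c / (real c + 1)"
  have x0: "0 \<le> x" and x1: "x < 1" by (auto simp: x_def field_simps)
  have "(\<lambda>n. 2 * (of_nat n * x ^ n) + x ^ n) \<longlonglongrightarrow> 2 * 0 + 0"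
    by (rule tendsto_add[OF tendsto_mult[OF tendsto_const powser_times_n_limit_0] LIMSEQ_power_zero]) (use x0 x1 in auto)
  then have "eventually (\<lambda>n. 2 * (of_nat n * x ^ n) + x ^ n < 1) sequentially"
    by (rule order_tendstoD) simp
  then obtain N where N: "\<And>n. n \<ge> N \<Longrightarrow> 2 * (of_nat n * x ^ n) + x ^ n < 1"
    by (auto simp: eventually_sequentially)
  define n where "n = Suc N"
  have "2 * (of_nat n * x ^ n) + x ^ n < 1" by (rule N) (simp add: n_def)
  then have "(2 * real n + 1) * x ^ n < 1" by (simp add: algebra_simps)
  moreover have "x ^ n = real c ^ n / (real c + 1) ^ n" by (simp add: x_def power_divide)
  moreover have pos: "(real c + 1) ^ n > 0" by simp
  ultimately have "(2 * real n + 1) * (real c ^ n / (real c + 1) ^ n) < 1" by simp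
  then have "(2 * real n + 1) * real c ^ n < (real c + 1) ^ n"
    using pos by (simp add: divide_less_eq mult.commute mult.left_commute)
  moreover have "real ((2*n+1) * c^n) = (2 * real n + 1) * real c ^ n" by (simp add: algebra_simps)
  moreover have "real ((c+1)^n) = (real c + 1) ^ n" by (simp add: add.commute)
  ultimately have lt: "(2*n+1) * c^n < (c+1)^n" by (simp only: of_nat_less_iff[symmetric])
  show ?thesis by (intro exI[of _ n] conjI) (simp add: n_def, fact lt)
qed

lemma pigeon: fixes G :: "nat poly"
  shows "\<exists>k. poly G 1 \<le> (degree G + 1) * coeff G k"
proof (rule ccontr)
  assume "\<not> ?thesis"
  then have lt: "\<And>k. coeff G k * (degree G + 1) < poly G 1" by (metis not_le mult.commute)
  obtain k where k: "\<forall>i. coeff G i \<le> coeff G k"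
  proof -
    have fin: "finite (coeff G ` {..degree G})" by simp
    have "Max (coeff G ` {..degree G}) \<in> coeff G ` {..degree G}" by (rule Max_in) (use fin in auto)
    then obtain k where k: "k \<le> degree G" "coeff G k = Max (coeff G ` {..degree G})" by (metis atMost_iff imageE)
    have "coeff G i \<le> coeff G k" for i
    proof (cases "i \<le> degree G")
      case True then show ?thesis using k fin by (simp add: Max_ge)
    next
      case False then show ?thesis by (simp add: coeff_eq_0)
    qed
    then show ?thesis using that by blast
  qed
  have "poly G 1 = (\<Sum>i\<le>degree G. coeff G i)" by (simp add: poly_altdef)
  also have "\<dots> \<le> (\<Sum>i\<le>degree G. coeff G k)" by (rule sum_mono) (use k in auto)
  also have "\<dots> = coeff G k * (degree G + 1)" by simp
  finally show False using lt[of k] by simp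
qed

lemma L:
  fixes F :: "nat poly" and b :: real and c :: nat
  assumes ev: "ev F b = real c" and F1: "poly F 1 > c" and dF: "degree F \<le> 2"
  shows "\<exists>\<alpha>. infinite (reps b \<alpha>)"
proof -
  obtain n where n1: "n \<ge> 1" and nlt: "(2*n+1) * c^n < (c+1)^n" using exp_beats_lin by blast
  define G where "G = F ^ n"
  have dG: "degree G \<le> 2 * n" unfolding G_def using degree_power_le[of F n] dF
    by (meson le_trans mult_le_mono1)
  have G1: "poly G 1 = (poly F 1)^n" by (simp add: G_def poly_power)
  have "(c+1)^n \<le> (poly F 1)^n" using F1 by (intro power_mono) auto
  moreover have "(degree G + 1) * c^n \<le> (2*n+1) * c^n" using dG by simp
  ultimately have "(degree G + 1) * c^n \<le> poly G 1" using nlt G1 by linarith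
  obtain k where k: "poly G 1 \<le> (degree G + 1) * coeff G k" using pigeon by blast
  have "(degree G + 1) * c^n \<le> (degree G + 1) * coeff G k"
    using \<open>(degree G + 1) * c^n \<le> poly G 1\<close> k by (rule le_trans)
  then have ck: "c^n \<le> coeff G k" by (subst (asm) mult_le_cancel1) simp
  define R where "R = G - monom (c^n) k"
  have RG: "R + monom (c^n) k = G"
    by (rule poly_eqI) (use ck in \<open>auto simp: R_def coeff_monom\<close>)
  have evG: "ev G b = real c ^ n" unfolding G_def ev_power ev ..
  have "ev R b + real (c^n) * b ^ k = ev G b"
    using arg_cong[OF RG, of "\<lambda>p. ev p b"] by (simp only: ev_add ev_monom)
  then have "ev R b = real c ^ n - real c ^ n * b ^ k" using evG by simp
  then have eq: "ev [:c^n:] b * (1 - ev (monom 1 k) b) = ev R b" by (simp add: algebra_simps)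
  have "c^n < (poly F 1)^n" using power_strict_mono[OF F1, of n] n1 by simp
  moreover have "poly R 1 + c^n = poly G 1"
    using arg_cong[OF RG, of "\<lambda>p. poly p (1::nat)"] by (simp only: poly_add poly_monom power_one mult_1_right)
  ultimately have R1: "poly R 1 \<ge> 1" using G1 by linarith
  have M1: "poly (monom 1 k) (1::nat) \<ge> 1" by (simp add: poly_monom)
  have "infinite (reps b (ev [:c^n:] b))" by (rule chain[OF eq M1 R1])
  then show ?thesis by blast
qed

lemma REP:
  fixes A B C :: int and f :: "nat poly"
  shows "\<exists>d::nat. \<exists>U V::int. \<forall>\<rho>::real. of_int A * \<rho>^2 + of_int B * \<rho> + of_int C = 0 \<longrightarrow>
           of_int A ^ d * ev f \<rho> = of_int U * \<rho> + of_int V"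
proof (induction f rule: pCons_induct)
  case 0
  show ?case by (rule exI[of _ 0], rule exI[of _ 0], rule exI[of _ 0]) simp
next
  case (pCons a p)
  then obtain d U V where IH: "\<And>\<rho>::real. of_int A * \<rho>^2 + of_int B * \<rho> + of_int C = 0 \<Longrightarrow>
           of_int A ^ d * ev p \<rho> = of_int U * \<rho> + of_int V" by blast
  show ?case
  proof (intro exI allI impI)
    fix \<rho> :: real assume r: "of_int A * \<rho>^2 + of_int B * \<rho> + of_int C = 0"
    have "of_int A ^ Suc d * ev (pCons a p) \<rho> = of_int A ^ Suc d * real a + of_int A * \<rho> * (of_int A ^ d * ev p \<rho>)"
      by (simp add: algebra_simps)
    also have "\<dots> = of_int A ^ Suc d * real a + of_int A * \<rho> * (of_int U * \<rho> + of_int V)" using IH[OF r] by simp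
    also have "\<dots> = of_int A ^ Suc d * real a + of_int U * (of_int A * \<rho>^2) + of_int A * of_int V * \<rho>"
      by (simp add: algebra_simps power2_eq_square)
    also have "of_int A * \<rho>^2 = - of_int B * \<rho> - of_int C" using r by simp
    finally show "of_int A ^ Suc d * ev (pCons a p) \<rho> = of_int (A * V - B * U) * \<rho> + of_int (A ^ Suc d * int a - C * U)"
      by (simp add: algebra_simps)
  qed
qed

lemma no_rat_root:
  fixes A B C :: int and r :: rat
  assumes A0: "A \<noteq> 0" and irr: "irreducible (map_poly rat_of_int [:C, B, A:])"
  shows "of_int A * r^2 + of_int B * r + of_int C \<noteq> 0"
proof
  assume h: "of_int A * r^2 + of_int B * r + of_int C = 0"
  define p where "p = map_poly rat_of_int [:C, B, A:]"
  have "poly p r = of_int A * r^2 + of_int B * r + of_int C"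
    by (simp add: p_def map_poly_pCons power2_eq_square algebra_simps)
  then have "poly p r = 0" using h by simp
  then have "[:-r, 1:] dvd p" by (simp add: poly_eq_0_iff_dvd)
  then obtain s where ps: "p = [:-r, 1:] * s" by (elim dvdE)
  have dp: "degree p = 2" using A0 by (simp add: p_def map_poly_pCons)
  then have p0: "p \<noteq> 0" by auto
  then have s0: "s \<noteq> 0" using ps by auto
  have "is_unit [:-r, 1:] \<or> is_unit s" using irreducibleD[OF irr[folded p_def] ps] .
  moreover have "\<not> is_unit [:-r, 1:]" by (subst is_unit_iff_degree) auto
  ultimately have "degree s = 0" using is_unit_iff_degree[OF s0] by simp
  moreover have "degree ([:-r, 1:] * s) = degree [:-r,1:] + degree s" by (rule degree_mult_eq) (use s0 in auto)
  ultimately have "degree p = 1" using ps by simp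
  then show False using dp by simp
qed

lemma lin_indep:
  fixes A B C X Y :: int and \<beta> :: real
  assumes nr: "\<And>r::rat. of_int A * r^2 + of_int B * r + of_int C \<noteq> 0"
    and hb: "of_int A * \<beta>^2 + of_int B * \<beta> + of_int C = 0"
    and e: "of_int X * \<beta> + of_int Y = 0"
  shows "X = 0 \<and> Y = 0"
proof (cases "X = 0")
  case True then show ?thesis using e by simp
next
  case False
  define r :: rat where "r = - of_int Y / of_int X"
  have "of_rat r = - real_of_int Y / real_of_int X" by (simp add: r_def of_rat_minus of_rat_divide)
  moreover have "\<beta> = - real_of_int Y / real_of_int X" using e False by (simp add: field_simps)
  ultimately have br: "\<beta> = of_rat r" by simp
  have "of_rat (of_int A * r^2 + of_int B * r + of_int C) = (0::real)"
    using hb br by (simp add: of_rat_add of_rat_mult of_rat_power)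
  then show ?thesis using nr[of r] by simp
qed

lemma transfer_root:
  fixes A B C :: int and \<beta> \<beta>' :: real and f g :: "nat poly"
  assumes nr: "\<And>r::rat. of_int A * r^2 + of_int B * r + of_int C \<noteq> 0" and A0: "A \<noteq> 0"
    and hb: "of_int A * \<beta>^2 + of_int B * \<beta> + of_int C = 0"
    and hb': "of_int A * \<beta>'^2 + of_int B * \<beta>' + of_int C = 0"
    and e: "ev f \<beta> = ev g \<beta>"
  shows "ev f \<beta>' = ev g \<beta>'"
proof -
  obtain d1 U1 V1 where f: "\<And>\<rho>::real. of_int A * \<rho>^2 + of_int B * \<rho> + of_int C = 0 \<Longrightarrow>
           of_int A ^ d1 * ev f \<rho> = of_int U1 * \<rho> + of_int V1" using REP[of A B C f] by blast
  obtain d2 U2 V2 where g: "\<And>\<rho>::real. of_int A * \<rho>^2 + of_int B * \<rho> + of_int C = 0 \<Longrightarrow>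
           of_int A ^ d2 * ev g \<rho> = of_int U2 * \<rho> + of_int V2" using REP[of A B C g] by blast
  have key: "of_int A ^ (d1 + d2) * (ev f \<rho> - ev g \<rho>) =
      of_int (A^d2 * U1 - A^d1 * U2) * \<rho> + of_int (A^d2 * V1 - A^d1 * V2)"
    if r: "of_int A * \<rho>^2 + of_int B * \<rho> + of_int C = 0" for \<rho> :: real
  proof -
    have "of_int A ^ (d1 + d2) * (ev f \<rho> - ev g \<rho>) =
        of_int A ^ d2 * (of_int A ^ d1 * ev f \<rho>) - of_int A ^ d1 * (of_int A ^ d2 * ev g \<rho>)"
      by (simp add: algebra_simps power_add)
    also have "\<dots> = of_int A ^ d2 * (of_int U1 * \<rho> + of_int V1) - of_int A ^ d1 * (of_int U2 * \<rho> + of_int V2)"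
      using f[OF r] g[OF r] by simp
    finally show ?thesis by (simp add: algebra_simps)
  qed
  have "of_int (A^d2 * U1 - A^d1 * U2) * \<beta> + of_int (A^d2 * V1 - A^d1 * V2) = (0::real)"
    using key[OF hb] e by simp
  then have "A^d2 * U1 - A^d1 * U2 = 0 \<and> A^d2 * V1 - A^d1 * V2 = 0"
    by (rule lin_indep[OF nr hb])
  then have "of_int A ^ (d1 + d2) * (ev f \<beta>' - ev g \<beta>') = 0" using key[OF hb'] by simp
  then show ?thesis using A0 by simp
qed

lemma fin_bounded: "finite {f :: nat poly. degree f \<le> N \<and> (\<forall>i. coeff f i \<le> K)}"
proof -
  have "{f :: nat poly. degree f \<le> N \<and> (\<forall>i. coeff f i \<le> K)} \<subseteq> Poly ` {xs. set xs \<subseteq> {0..K} \<and> length xs = Suc N}"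
  proof
    fix f :: "nat poly" assume f: "f \<in> {f. degree f \<le> N \<and> (\<forall>i. coeff f i \<le> K)}"
    define xs where "xs = map (coeff f) [0..<Suc N]"
    have "Poly xs = f"
    proof (rule poly_eqI)
      fix n show "coeff (Poly xs) n = coeff f n"
        using f by (auto simp: xs_def nth_default_def coeff_eq_0 simp del: upt_Suc)
    qed
    moreover have "set xs \<subseteq> {0..K}" "length xs = Suc N" using f by (auto simp: xs_def)
    ultimately show "f \<in> Poly ` {xs. set xs \<subseteq> {0..K} \<and> length xs = Suc N}" by blast
  qed
  moreover have "finite (Poly ` {xs. set xs \<subseteq> {0..K} \<and> length xs = Suc N})"
    by (intro finite_imageI finite_lists_length_eq) simp
  ultimately show ?thesis by (rule finite_subset)
qed

lemma fin_reps:
  fixes \<gamma> v :: real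
  assumes g1: "\<gamma> > 1"
  shows "finite {f :: nat poly. ev f \<gamma> = v}"
proof -
  obtain N where N: "v < \<gamma> ^ N" using real_arch_pow[OF g1] by blast
  define K where "K = nat \<lfloor>v\<rfloor>"
  have "{f :: nat poly. ev f \<gamma> = v} \<subseteq> {f. degree f \<le> N \<and> (\<forall>i. coeff f i \<le> K)}"
  proof
    fix f :: "nat poly" assume "f \<in> {f :: nat poly. ev f \<gamma> = v}"
    then have ev: "ev f \<gamma> = v" by simp
    have tm: "real (coeff f i) * \<gamma> ^ i \<le> v" if "i \<le> degree f" for i
    proof -
      have "real (coeff f i) * \<gamma> ^ i \<le> (\<Sum>i\<le>degree f. real (coeff f i) * \<gamma> ^ i)"
        by (rule member_le_sum) (use g1 that in auto)
      then show ?thesis using ev by (simp add: ev_altdef)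
    qed

    have c: "coeff f i \<le> K" for i
    proof (cases "i \<le> degree f")
      case True
      have "real (coeff f i) \<le> real (coeff f i) * \<gamma> ^ i"
        using g1 one_le_power[of \<gamma> i] mult_left_mono[of 1 "\<gamma> ^ i" "real (coeff f i)"] by simp
      then have "real (coeff f i) \<le> v" using tm[OF True] by linarith
      then show ?thesis unfolding K_def by (rule le_nat_floor)
    next
      case False then show ?thesis by (simp add: coeff_eq_0)
    qed
    have d: "degree f \<le> N"
    proof (rule ccontr)
      assume "\<not> degree f \<le> N"
      then have f0: "f \<noteq> 0" by auto
      then have "lead_coeff f \<ge> 1" using leading_coeff_neq_0[OF f0] by linarith
      then have "\<gamma> ^ degree f \<le> real (lead_coeff f) * \<gamma> ^ degree f"
        using g1 by simp
      also have "\<dots> \<le> v" using tm[of "degree f"] by simp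
      also have "\<dots> < \<gamma> ^ N" by (rule N)
      finally have "degree f < N" using g1 power_less_imp_less_exp by blast
      then show False using \<open>\<not> degree f \<le> N\<close> by simp
    qed
    show "f \<in> {f. degree f \<le> N \<and> (\<forall>i. coeff f i \<le> K)}" using c d by simp
  qed
  then show ?thesis using fin_bounded finite_subset by blast
qed

lemma H:
  fixes A B C :: int and \<beta> \<beta>' :: real
  assumes A0: "A > 0"
    and hb: "of_int A * \<beta>^2 + of_int B * \<beta> + of_int C = 0"
    and hb': "of_int A * \<beta>'^2 + of_int B * \<beta>' + of_int C = 0"
    and ne: "\<beta> \<noteq> \<beta>'" and b1: "\<bar>\<beta>\<bar> < 1" and b1': "\<bar>\<beta>'\<bar> < 1"
  shows "\<exists>\<alpha>. infinite (reps \<beta> \<alpha>)"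
proof -
  define e where "e = (\<lambda>(t::nat) (\<rho>::real). \<rho> ^ t + \<rho> ^ Suc t)"
  have elim: "(\<lambda>t. e t \<rho>) \<longlonglongrightarrow> 0" if "\<bar>\<rho>\<bar> < 1" for \<rho> :: real
  proof -
    have "(\<lambda>t. \<rho> ^ t + \<rho> * \<rho> ^ t) \<longlonglongrightarrow> 0 + \<rho> * 0"
      by (intro tendsto_add tendsto_mult tendsto_const LIMSEQ_power_zero) (use that in auto)
    then show ?thesis by (simp add: e_def)
  qed
  define g where "g = (\<lambda>t. (e t \<beta> - e t \<beta>') / (\<beta> - \<beta>'))"
  define h where "h = (\<lambda>t. e t \<beta> - g t * \<beta>)"
  have gl: "g \<longlonglongrightarrow> (0 - 0) / (\<beta> - \<beta>')" unfolding g_def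
    by (intro tendsto_divide tendsto_diff elim b1 b1' tendsto_const) (use ne in auto)
  have hl: "h \<longlonglongrightarrow> 0 - 0 * \<beta>"
    using gl unfolding h_def by (intro tendsto_diff tendsto_mult elim b1 tendsto_const) auto
  have "eventually (\<lambda>t. g t < 1) sequentially" using gl by (rule order_tendstoD) simp
  moreover have "eventually (\<lambda>t. h t < 1) sequentially" using hl by (rule order_tendstoD) simp
  ultimately have "eventually (\<lambda>t. g t < 1 \<and> h t < 1) sequentially" by (rule eventually_conj)
  then obtain t where gt: "g t < 1" and ht: "h t < 1" by (auto simp: eventually_sequentially)
  define f2 :: "nat poly" where "f2 = monom 1 t + monom 1 (Suc t)"
  have evf2: "ev f2 \<rho> = e t \<rho>" for \<rho> by (simp add: f2_def e_def)
  obtain d U V where R: "\<And>\<rho>::real. of_int A * \<rho>^2 + of_int B * \<rho> + of_int C = 0 \<Longrightarrow>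
           of_int A ^ d * ev f2 \<rho> = of_int U * \<rho> + of_int V" using REP[of A B C f2] by blast
  have Rb: "of_int A ^ d * e t \<beta> = of_int U * \<beta> + of_int V" using R[OF hb] evf2 by simp
  have Rb': "of_int A ^ d * e t \<beta>' = of_int U * \<beta>' + of_int V" using R[OF hb'] evf2 by simp
  have Ad: "(of_int A ^ d :: real) > 0" using A0 by simp
  have "of_int A ^ d * (e t \<beta> - e t \<beta>') = of_int U * (\<beta> - \<beta>')" using Rb Rb' by (simp add: algebra_simps)
  then have Ug: "of_int U = of_int A ^ d * g t" using ne by (simp add: g_def field_simps)
  have Vh: "of_int V = of_int A ^ d * h t" using Rb Ug by (simp add: h_def algebra_simps)
  have "(of_int U :: real) < of_int A ^ d" using Ug gt Ad by simp
  then have U1: "U < A ^ d" by (metis of_int_less_iff of_int_power)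
  have "(of_int V :: real) < of_int A ^ d" using Vh ht Ad by simp
  then have V1: "V < A ^ d" by (metis of_int_less_iff of_int_power)
  define S :: "nat poly" where "S = [:nat (A^d), nat (A^d):]"
  define Rp :: "nat poly" where "Rp = [:nat (A^d - V), nat (A^d - U):]"
  have cast: "real (nat (A^d)) = of_int A ^ d" using A0 by simp
  have cast2: "real (nat (A^d - V)) = of_int A ^ d - of_int V" using V1 by simp
  have cast3: "real (nat (A^d - U)) = of_int A ^ d - of_int U" using U1 by simp
  have "ev S \<beta> * (1 - ev (monom 1 t) \<beta>) = of_int A ^ d * (1 + \<beta>) - of_int A ^ d * e t \<beta>"
    by (simp add: S_def cast e_def algebra_simps)
  also have "\<dots> = ev Rp \<beta>" using Rb by (simp add: Rp_def cast2 cast3 algebra_simps)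
  finally have eq: "ev S \<beta> * (1 - ev (monom 1 t) \<beta>) = ev Rp \<beta>" .
  have M1: "poly (monom 1 t) (1::nat) \<ge> 1" by (simp add: poly_monom)
  have R1: "poly Rp (1::nat) \<ge> 1" using V1 by (simp add: Rp_def)
  have "infinite (reps \<beta> (ev S \<beta>))" by (rule chain[OF eq M1 R1])
  then show ?thesis by blast
qed

lemma pos2: "(x::real) * y > 0 \<Longrightarrow> x + y > 0 \<Longrightarrow> x > 0 \<and> y > 0"
  by (metis add_nonpos_nonpos less_le_not_le linorder_linear mult_nonneg_nonpos mult_nonpos_nonneg order_less_le_trans)

theorem theorem7:
  fixes A B C :: int and \<beta> \<beta>' :: real
  assumes "A > 0"
    and "irreducible (map_poly rat_of_int [:C, B, A:])"
    and "poly (map_poly real_of_int [:C, B, A:]) \<beta> = 0"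
    and "poly (map_poly real_of_int [:C, B, A:]) \<beta>' = 0"
    and "\<beta>' \<noteq> \<beta>"
  shows "((\<forall>\<alpha>::real. finite (reps \<beta> \<alpha>))
           \<longleftrightarrow> (2*A + B \<le> 0 \<or> (2*A + B > 0 \<and> A + B + C < 0)))
       \<and> ((2*A + B \<le> 0 \<or> (2*A + B > 0 \<and> A + B + C < 0))
           \<longleftrightarrow> (\<beta> > 1 \<or> \<beta>' > 1))"
proof -
  have A0: "A > 0" using assms(1) .
  have A0': "A \<noteq> 0" using A0 by simp
  have hb: "of_int A * \<beta>^2 + of_int B * \<beta> + of_int C = 0" using assms(3) by (simp add: q_eval)
  have hb': "of_int A * \<beta>'^2 + of_int B * \<beta>' + of_int C = 0" using assms(4) by (simp add: q_eval)
  have ne: "\<beta> \<noteq> \<beta>'" using assms(5) by simp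
  have nr: "\<And>r::rat. of_int A * r^2 + of_int B * r + of_int C \<noteq> 0"
    using no_rat_root[OF A0' assms(2)] by blast
  have "(\<beta> - \<beta>') * (of_int A * (\<beta> + \<beta>') + of_int B) = 0"
    using hb hb' by (simp add: algebra_simps power2_eq_square)
  then have vs: "of_int A * (\<beta> + \<beta>') = - of_int B" using ne by simp
  have vp: "of_int A * (\<beta> * \<beta>') = of_int C"
  proof -
    have "of_int C = - of_int A * \<beta>^2 - of_int B * \<beta>" using hb by simp
    also have "\<dots> = - of_int A * \<beta>^2 + of_int A * (\<beta> + \<beta>') * \<beta>" using vs by simp
    finally show ?thesis by (simp add: algebra_simps power2_eq_square)
  qed
  have n1: "A + B + C \<noteq> 0"
  proof
    assume "A + B + C = 0"
    then have "of_int A * (1::rat)^2 + of_int B * 1 + of_int C = 0"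
      by (metis mult_1_right one_power2 of_int_add of_int_0)
    then show False using nr by blast
  qed
  have C0: "C \<noteq> 0" using nr[of 0] by auto
  define a where "a = (of_int A :: real)"
  have a0: "a > 0" using A0 by (simp add: a_def)
  have I1: "a * ((1 - \<beta>) * (1 - \<beta>')) = of_int (A + B + C)"
    using vs vp by (simp add: a_def algebra_simps)
  have I2: "a * ((1 - \<beta>) + (1 - \<beta>')) = of_int (2*A + B)"
    using vs by (simp add: a_def algebra_simps)
  have I3: "a * ((1 + \<beta>) * (1 + \<beta>')) = of_int (A - B + C)"
    using vs vp by (simp add: a_def algebra_simps)
  have I4: "a * ((1 + \<beta>) + (1 + \<beta>')) = of_int (2*A - B)"
    using vs by (simp add: a_def algebra_simps)
  have bn1: "\<beta> \<noteq> 1" "\<beta>' \<noteq> 1"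
    using I1 n1 by auto
  define P2 where "P2 = (2*A + B \<le> 0 \<or> (2*A + B > 0 \<and> A + B + C < 0))"
  define P3 where "P3 = (\<beta> > 1 \<or> \<beta>' > 1)"
  have notP3: "\<not> P3 \<longleftrightarrow> (2*A + B > 0 \<and> A + B + C > 0)"
  proof
    assume "\<not> P3"
    then have x: "1 - \<beta> > 0" "1 - \<beta>' > 0" using bn1 by (auto simp: P3_def)
    then have "a * ((1 - \<beta>) * (1 - \<beta>')) > 0" "a * ((1 - \<beta>) + (1 - \<beta>')) > 0" using a0 by simp_all
    then show "2*A + B > 0 \<and> A + B + C > 0" using I1 I2 by simp
  next
    assume h: "2*A + B > 0 \<and> A + B + C > 0"
    then have "a * ((1 - \<beta>) * (1 - \<beta>')) > 0" "a * ((1 - \<beta>) + (1 - \<beta>')) > 0" using I1 I2 by simp_all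
    then have "(1 - \<beta>) * (1 - \<beta>') > 0" "(1 - \<beta>) + (1 - \<beta>') > 0" using a0 zero_less_mult_pos by blast+
    then have "1 - \<beta> > 0 \<and> 1 - \<beta>' > 0" using pos2 by blast
    then show "\<not> P3" by (auto simp: P3_def)
  qed
  have P23: "P2 \<longleftrightarrow> P3" using notP3 n1 unfolding P2_def by auto
  have key: "(\<forall>\<alpha>::real. finite (reps \<beta> \<alpha>)) \<longleftrightarrow> P3"
  proof
    assume fin: "\<forall>\<alpha>::real. finite (reps \<beta> \<alpha>)"
    show P3
    proof (rule ccontr)
      assume np: "\<not> P3"
      then have h: "2*A + B > 0" "A + B + C > 0" using notP3 by auto
      have "\<exists>\<alpha>. infinite (reps \<beta> \<alpha>)"
      proof (cases "B \<ge> 0")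
        case Bp: True
        show ?thesis
        proof (cases "C > 0")
          case True
          define F where "F = [:nat C, nat B, nat A:]"
          have "ev F \<beta> = real 0" using hb Bp True A0 by (simp add: F_def algebra_simps power2_eq_square)
          moreover have "poly F 1 > 0" using A0 by (simp add: F_def)
          moreover have "degree F \<le> 2" by (simp add: F_def)
          ultimately show ?thesis by (rule L)
        next
          case False
          then have Cn: "C < 0" using C0 by simp
          define F where "F = [:0, nat B, nat A:]"
          have "ev F \<beta> = real (nat (- C))" using hb Bp Cn A0 by (simp add: F_def algebra_simps power2_eq_square)
          moreover have "poly F 1 > nat (- C)" using A0 Bp Cn h by (simp add: F_def)
          moreover have "degree F \<le> 2" by (simp add: F_def)
          ultimately show ?thesis by (rule L)
        qed
      next
        case False
        have x: "1 - \<beta> > 0" "1 - \<beta>' > 0" using bn1 np by (auto simp: P3_def)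
        have "a * ((1 + \<beta>) * (1 + \<beta>')) > 0" "a * ((1 + \<beta>) + (1 + \<beta>')) > 0"
          using I3 I4 False h by simp_all
        then have "(1 + \<beta>) * (1 + \<beta>') > 0" "(1 + \<beta>) + (1 + \<beta>') > 0" using a0 zero_less_mult_pos by blast+
        then have "1 + \<beta> > 0 \<and> 1 + \<beta>' > 0" using pos2 by blast
        then have "\<bar>\<beta>\<bar> < 1" "\<bar>\<beta>'\<bar> < 1" using x by auto
        then show ?thesis using H[OF A0 hb hb' ne] by blast
      qed
      then show False using fin by blast
    qed
  next
    assume P3
    show "\<forall>\<alpha>::real. finite (reps \<beta> \<alpha>)"
    proof
      fix \<alpha> :: real
      show "finite (reps \<beta> \<alpha>)"
      proof (cases "\<beta> > 1")
        case True
        have "reps \<beta> \<alpha> = {f. ev f \<beta> = \<alpha>}" by (simp add: reps_def ev_def)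
        then show ?thesis using fin_reps[OF True] by simp
      next
        case False
        then have g: "\<beta>' > 1" using \<open>P3\<close> by (simp add: P3_def)
        show ?thesis
        proof (cases "reps \<beta> \<alpha> = {}")
          case True then show ?thesis by simp
        next
          case False
          then obtain g0 where g0: "ev g0 \<beta> = \<alpha>" by (auto simp: reps_def ev_def)
          have "reps \<beta> \<alpha> \<subseteq> {f. ev f \<beta>' = ev g0 \<beta>'}"
          proof
            fix f assume "f \<in> reps \<beta> \<alpha>"
            then have "ev f \<beta> = ev g0 \<beta>" using g0 by (simp add: reps_def ev_def)
            then have "ev f \<beta>' = ev g0 \<beta>'" by (rule transfer_root[OF nr A0' hb hb'])
            then show "f \<in> {f. ev f \<beta>' = ev g0 \<beta>'}" by simp
          qed
          then show ?thesis using fin_reps[OF g] finite_subset by blast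
        qed
      qed
    qed
  qed
  have "((\<forall>\<alpha>::real. finite (reps \<beta> \<alpha>)) \<longleftrightarrow> P2) \<and> (P2 \<longleftrightarrow> P3)" using key P23 by blast
  then show ?thesis unfolding P2_def P3_def .
qed

end
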